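(* Consider the SBCM on the path graph $P_n$ ($n\ge1$) with nodes $1,\ldots,n+2$ in a path, zealots at nodes $1$ and $n+2$ with opinions $-(n+1)/2$ and $(n+1)/2$, and persuadable nodes $2,\ldots,n+1$; let $\bar{\mathbf{x}}$ be the harmonic state $\bar x_k=k-\frac{n+3}{2}$. Let $y$ be the unique negative real solution of $e^{y-2}=y^2/4$. Then: (1) If $\delta\in[0,1]$, there exists $\gamma_c>0$ such that $\bar{\mathbf{x}}$ is linearly stable for all $\gamma\in[0,\gamma_c)$ and linearly unstable for all $\gamma>\gamma_c$; moreover $\gamma_c=1$ when $\delta=1$. (2) If $\delta\in(1,1-y)$, there exist $\gamma_1,\gamma_2>0$ such that $\bar{\mathbf{x}}$ is linearly unstable if and only if $\gamma\in(\gamma_1,\gamma_2)$, and is linearly stable if $\gamma<\gamma_1$ or $\gamma>\gamma_2$. (3) If $\delta>1-y$, then $\bar{\mathbf{x}}$ is linearly stable for all $\gamma>0$.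
   Context: The SBCM with parameters $\gamma,\delta\ge0$ on a graph with zealots $\mathcal{Z}$ and persuadable nodes $\mathcal{P}$: with $w(x_i,x_j)=\frac{1}{1+e^{\gamma(x_i-x_j)^2-\gamma\delta}}$ for adjacent $i\sim j$ and $0$ otherwise, the dynamics are $\frac{dx_i}{dt}=f_i(\mathbf{x})=\frac{\sum_j w(x_i,x_j)(x_j-x_i)}{\sum_j w(x_i,x_j)}$ for $i\in\mathcal{P}$ and $\frac{dx_i}{dt}=0$ for zealots. The state $\bar{\mathbf{x}}$ is a steady state for every $\gamma$. A steady state is linearly stable if all eigenvalues of $\mathbf{J}_{\mathcal{P}}=(\partial f_i/\partial x_j)_{i,j\in\mathcal{P}}$ at it are strictly negative, and linearly unstable if $\mathbf{J}_{\mathcal{P}}$ has a strictly positive eigenvalue. *)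

theory Defs
  imports "HOL-Analysis.Derivative" "Jordan_Normal_Form.Char_Poly"
begin

definition sbcm_w :: "real \<Rightarrow> real \<Rightarrow> real \<Rightarrow> real \<Rightarrow> real" where
  "sbcm_w \<gamma> \<delta> a b = 1 / (1 + exp (\<gamma> * (a - b)^2 - \<gamma> * \<delta>))"

definition sbcm_weight :: "(nat \<Rightarrow> nat \<Rightarrow> bool) \<Rightarrow> real \<Rightarrow> real \<Rightarrow> (nat \<Rightarrow> real) \<Rightarrow> nat \<Rightarrow> nat \<Rightarrow> real" where
  "sbcm_weight adj \<gamma> \<delta> x i j = (if adj i j then sbcm_w \<gamma> \<delta> (x i) (x j) else 0)"

definition sbcm_f :: "nat set \<Rightarrow> (nat \<Rightarrow> nat \<Rightarrow> bool) \<Rightarrow> real \<Rightarrow> real \<Rightarrow> nat \<Rightarrow> (nat \<Rightarrow> real) \<Rightarrow> real" where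
  "sbcm_f V adj \<gamma> \<delta> i x =
     (\<Sum>j\<in>V. sbcm_weight adj \<gamma> \<delta> x i j * (x j - x i)) / (\<Sum>j\<in>V. sbcm_weight adj \<gamma> \<delta> x i j)"

definition sbcm_partial :: "nat set \<Rightarrow> (nat \<Rightarrow> nat \<Rightarrow> bool) \<Rightarrow> real \<Rightarrow> real \<Rightarrow> nat \<Rightarrow> nat \<Rightarrow> (nat \<Rightarrow> real) \<Rightarrow> real" where
  "sbcm_partial V adj \<gamma> \<delta> i j x = deriv (\<lambda>t. sbcm_f V adj \<gamma> \<delta> i (x(j := t))) (x j)"

text \<open>Path graph P_n: nodes 1..n+2, i ~ j iff |i - j| = 1; zealots 1 and n+2,
  persuadable nodes 2..n+1.\<close>
definition path_nodes :: "nat \<Rightarrow> nat set" where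
  "path_nodes n = {1..n+2}"

definition path_adj :: "nat \<Rightarrow> nat \<Rightarrow> bool" where
  "path_adj i j \<longleftrightarrow> i = j + 1 \<or> j = i + 1"

definition harmonic_state :: "nat \<Rightarrow> nat \<Rightarrow> real" where
  "harmonic_state n k = real k - (real n + 3) / 2"

text \<open>Jacobian J_P restricted to persuadable nodes; matrix index p (0-based)
  corresponds to node p+2.\<close>
definition path_jacobian :: "nat \<Rightarrow> real \<Rightarrow> real \<Rightarrow> real mat" where
  "path_jacobian n \<gamma> \<delta> = mat n n (\<lambda>(p, q).
      sbcm_partial (path_nodes n) path_adj \<gamma> \<delta> (p + 2) (q + 2) (harmonic_state n))"

definition lin_stable :: "real mat \<Rightarrow> bool" where
  "lin_stable J \<longleftrightarrow> (\<forall>c. eigenvalue (map_mat complex_of_real J) c \<longrightarrow> Im c = 0 \<and> Re c < 0)"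

definition lin_unstable :: "real mat \<Rightarrow> bool" where
  "lin_unstable J \<longleftrightarrow> (\<exists>r::real. r > 0 \<and> eigenvalue J r)"

end

theory Submission
  imports Defs
begin


definition WW :: "real \<Rightarrow> real \<Rightarrow> real \<Rightarrow> real" where
  "WW g d s = 1 / (1 + exp (g * s^2 - g * d))"

definition WWd :: "real \<Rightarrow> real \<Rightarrow> real \<Rightarrow> real" where
  "WWd g d s = - (2 * g * s * exp (g * s^2 - g * d)) / (1 + exp (g * s^2 - g * d))^2"

lemma sbcm_w_WW: "sbcm_w g d a b = WW g d (b - a)"
  unfolding sbcm_w_def WW_def by (simp add: power2_commute)

definition Phi :: "real \<Rightarrow> real \<Rightarrow> real \<Rightarrow> real \<Rightarrow> real" where
  "Phi g d s1 s2 = (WW g d s1 * s1 + WW g d s2 * s2) / (WW g d s1 + WW g d s2)"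

definition acoef :: "real \<Rightarrow> real \<Rightarrow> real" where
  "acoef g d = 1/2 - g * exp (g - g*d) / (1 + exp (g - g*d))"

lemma WW_deriv: "(WW g d has_real_derivative WWd g d s) (at s)"
  unfolding WW_def WWd_def
  apply (rule derivative_eq_intros refl)+
  apply (smt (verit) exp_gt_zero)
  apply (simp add: power2_eq_square)
  done

lemma WW_deriv_chain [derivative_intros]:
  "(f has_real_derivative f') (at x within S) \<Longrightarrow>
   ((\<lambda>x. WW g d (f x)) has_real_derivative (WWd g d (f x) * f')) (at x within S)"
  using DERIV_chain2[OF WW_deriv] by blast

lemma WW_pos: "WW g d s > 0"
  unfolding WW_def by (smt (verit) exp_gt_zero divide_pos_pos)

lemma WW_1: "WW g d 1 = 1 / (1 + exp (g - g*d))" "WW g d (-1) = 1 / (1 + exp (g - g*d))"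
  unfolding WW_def by simp_all

lemma WWd_1: "WWd g d 1 = - (2 * g * exp (g - g*d)) / (1 + exp (g - g*d))^2"
   "WWd g d (-1) = (2 * g * exp (g - g*d)) / (1 + exp (g - g*d))^2"
  unfolding WWd_def by simp_all

lemma d1: "((\<lambda>t. Phi g d (-1) (t - c)) has_real_derivative acoef g d) (at (c+1))"
proof -
  obtain E where E: "exp (g - g*d) = E" "E > 0" "1 + E > 0" "1 + E \<noteq> 0" by (smt (verit) exp_gt_zero)
  have E2: "1 + (E * E + E * 2) \<noteq> 0" using E(2) by (smt (verit) mult_pos_pos)
  define w where "w = 1/(1+E)"
  have w: "w > 0" using E unfolding w_def by simp
  have F: "WW g d 1 = w" "WW g d (-1) = w" "WWd g d 1 = -(2*g*E)*w^2"
    "WWd g d (-1) = (2*g*E)*w^2" "acoef g d = 1/2 - g*E*w"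
    using WW_1 WWd_1 E(1) acoef_def unfolding w_def by (auto simp: power_divide)
  show ?thesis unfolding Phi_def
    apply (rule derivative_eq_intros refl)+
    using WW_pos apply (smt (verit))
    using w apply (simp add: F)
    using w apply (simp add: field_simps power2_eq_square)
    done
qed

lemma d2: "((\<lambda>t. Phi g d (t - c) 1) has_real_derivative acoef g d) (at (c-1))"
proof -
  obtain E where E: "exp (g - g*d) = E" "E > 0" "1 + E > 0" "1 + E \<noteq> 0" by (smt (verit) exp_gt_zero)
  have E2: "1 + (E * E + E * 2) \<noteq> 0" using E(2) by (smt (verit) mult_pos_pos)
  define w where "w = 1/(1+E)"
  have w: "w > 0" using E unfolding w_def by simp
  have F: "WW g d 1 = w" "WW g d (-1) = w" "WWd g d 1 = -(2*g*E)*w^2"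
    "WWd g d (-1) = (2*g*E)*w^2" "acoef g d = 1/2 - g*E*w"
    using WW_1 WWd_1 E(1) acoef_def unfolding w_def by (auto simp: power_divide)
  show ?thesis unfolding Phi_def
    apply (rule derivative_eq_intros refl)+
    using WW_pos apply (smt (verit))
    using w apply (simp add: F)
    using w apply (simp add: field_simps power2_eq_square)
    done
qed

lemma d3: "((\<lambda>t. Phi g d (c - 1 - t) (c + 1 - t)) has_real_derivative - 2 * acoef g d) (at c)"
proof -
  obtain E where E: "exp (g - g*d) = E" "E > 0" "1 + E > 0" "1 + E \<noteq> 0" by (smt (verit) exp_gt_zero)
  have E2: "1 + (E * E + E * 2) \<noteq> 0" using E(2) by (smt (verit) mult_pos_pos)
  define w where "w = 1/(1+E)"
  have w: "w > 0" using E unfolding w_def by simp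
  have F: "WW g d 1 = w" "WW g d (-1) = w" "WWd g d 1 = -(2*g*E)*w^2"
    "WWd g d (-1) = (2*g*E)*w^2" "acoef g d = 1/2 - g*E*w"
    using WW_1 WWd_1 E(1) acoef_def unfolding w_def by (auto simp: power_divide)
  show ?thesis unfolding Phi_def
    apply (rule derivative_eq_intros refl)+
    using WW_pos apply (smt (verit))
    using w apply (simp add: F)
    using w apply (simp add: field_simps power2_eq_square)
    done
qed

lemma sum_adj:
  assumes "2 \<le> i" "i \<le> n + 1"
  shows "(\<Sum>j\<in>path_nodes n. (if path_adj i j then F j else 0)) = F (i - 1) + F (i + 1)"
proof -
  have "{j \<in> path_nodes n. path_adj i j} = {i - 1, i + 1}"
    using assms unfolding path_nodes_def path_adj_def by auto
  moreover have "(\<Sum>j\<in>path_nodes n. (if path_adj i j then F j else 0)) = sum F {j \<in> path_nodes n. path_adj i j}"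
    by (rule sum.inter_filter[symmetric]) (simp add: path_nodes_def)
  ultimately have "(\<Sum>j\<in>path_nodes n. (if path_adj i j then F j else 0)) = sum F {i - 1, i + 1}"
    by simp
  also have "\<dots> = F (i - 1) + F (i + 1)" using assms by simp
  finally show ?thesis .
qed

lemma f_eq:
  assumes "2 \<le> i" "i \<le> n + 1"
  shows "sbcm_f (path_nodes n) path_adj g d i x = Phi g d (x (i - 1) - x i) (x (i + 1) - x i)"
proof -
  have 1: "(\<Sum>j\<in>path_nodes n. sbcm_weight path_adj g d x i j * (x j - x i))
      = (\<Sum>j\<in>path_nodes n. if path_adj i j then WW g d (x j - x i) * (x j - x i) else 0)"
    by (rule sum.cong) (auto simp: sbcm_weight_def sbcm_w_WW)
  have 2: "(\<Sum>j\<in>path_nodes n. sbcm_weight path_adj g d x i j)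
      = (\<Sum>j\<in>path_nodes n. if path_adj i j then WW g d (x j - x i) else 0)"
    by (rule sum.cong) (auto simp: sbcm_weight_def sbcm_w_WW)
  show ?thesis unfolding sbcm_f_def 1 2 sum_adj[OF assms] Phi_def ..
qed

definition Jent :: "real \<Rightarrow> nat \<Rightarrow> nat \<Rightarrow> real" where
  "Jent a p q = (if p = q then - 2 * a else if p = q + 1 \<or> q = p + 1 then a else 0)"

lemma partial_eq:
  assumes "p < n" "q < n"
  shows "sbcm_partial (path_nodes n) path_adj g d (p + 2) (q + 2) (harmonic_state n) = Jent (acoef g d) p q"
proof -
  let ?x = "harmonic_state n"
  define c where "c = ?x (p + 2)"
  have xm: "?x (p + 1) = c - 1" and xp: "?x (p + 3) = c + 1"
    unfolding c_def harmonic_state_def by simp_all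
  have xc: "?x (Suc (Suc p)) = c" unfolding c_def by simp
  have fe: "\<And>t. sbcm_f (path_nodes n) path_adj g d (p + 2) (?x(q + 2 := t))
     = Phi g d ((?x(q + 2 := t)) (p + 1) - (?x(q + 2 := t)) (p + 2)) ((?x(q + 2 := t)) (p + 3) - (?x(q + 2 := t)) (p + 2))"
    using f_eq[of "p+2" n g d] assms by (simp add: numeral_3_eq_3)
  consider "q = p" | "q = p + 1" | "p = q + 1" | "q \<noteq> p \<and> q \<noteq> p + 1 \<and> p \<noteq> q + 1" by linarith
  then show ?thesis
  proof cases
    case 1
    have "(\<lambda>t. sbcm_f (path_nodes n) path_adj g d (p + 2) (?x(q + 2 := t))) = (\<lambda>t. Phi g d (c - 1 - t) (c + 1 - t))"
      unfolding fe using 1 xm xp xc by (simp add: numeral_3_eq_3)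
    then show ?thesis unfolding sbcm_partial_def using 1 d3[of g d c]
      by (simp add: DERIV_imp_deriv Jent_def c_def)
  next
    case 2
    have "(\<lambda>t. sbcm_f (path_nodes n) path_adj g d (p + 2) (?x(q + 2 := t))) = (\<lambda>t. Phi g d (-1) (t - c))"
      unfolding fe using 2 xm xp xc by (simp add: numeral_3_eq_3)
    moreover have "?x (q + 2) = c + 1" using 2 xp by (simp add: numeral_3_eq_3)
    ultimately show ?thesis unfolding sbcm_partial_def using 2 d1[of g d c]
      by (simp add: DERIV_imp_deriv Jent_def)
  next
    case 3
    have "(\<lambda>t. sbcm_f (path_nodes n) path_adj g d (p + 2) (?x(q + 2 := t))) = (\<lambda>t. Phi g d (t - c) 1)"
      unfolding fe using 3 xm xp xc by (simp add: numeral_3_eq_3)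
    moreover have "?x (q + 2) = c - 1" using 3 xm by (simp add: numeral_3_eq_3)
    ultimately show ?thesis unfolding sbcm_partial_def using 3 d2[of g d c]
      by (simp add: DERIV_imp_deriv Jent_def)
  next
    case 4
    have "(\<lambda>t. sbcm_f (path_nodes n) path_adj g d (p + 2) (?x(q + 2 := t))) = (\<lambda>t. Phi g d (-1) 1)"
      unfolding fe using 4 xm xp xc by (simp add: numeral_3_eq_3)
    then show ?thesis unfolding sbcm_partial_def using 4
      by (simp add: DERIV_imp_deriv Jent_def)
  qed
qed

lemma jac_eq: "path_jacobian n g d = mat n n (\<lambda>(p, q). Jent (acoef g d) p q)"
  unfolding path_jacobian_def by (rule eq_matI) (auto simp: partial_eq[simplified add_2_eq_Suc'])



definition Jg :: "'a::comm_ring_1 \<Rightarrow> nat \<Rightarrow> nat \<Rightarrow> 'a" where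
  "Jg a p q = (if p = q then - 2 * a else if p = q + 1 \<or> q = p + 1 then a else 0)"

lemma Jent_Jg: "Jent a p q = Jg a p q" unfolding Jent_def Jg_def by simp

lemma of_real_Jent: "of_real (Jent a p q) = (Jg (of_real a) p q :: complex)"
  unfolding Jent_def Jg_def by simp

lemma tri_sum:
  fixes v :: "nat \<Rightarrow> 'a::comm_ring_1"
  assumes "p < n"
  shows "(\<Sum>q<n. Jg a p q * v q) =
    a * ((if p = 0 then 0 else v (p - 1)) + (if p + 1 < n then v (p + 1) else 0)) - 2 * a * v p"
proof -
  have "(\<Sum>q<n. Jg a p q * v q) = (\<Sum>q<n. (if q = p then - 2 * a * v p else 0)
      + (if p \<noteq> 0 then (if q = p - 1 then a * v (p - 1) else 0) else 0)
      + (if q = p + 1 then a * v (p + 1) else 0))"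
    by (rule sum.cong) (auto simp: Jg_def)
  also have "\<dots> = - 2 * a * v p + (if p = 0 then 0 else a * v (p - 1))
      + (if p + 1 < n then a * v (p + 1) else 0)"
    using assms by (simp add: sum.distrib)
  finally show ?thesis by (simp add: algebra_simps)
qed

lemma mat_mult_entry:
  assumes "v \<in> carrier_vec n" "p < n"
  shows "vec_index (mat n n (\<lambda>(p, q). f p q) *\<^sub>v v) p = (\<Sum>q<n. f p q * vec_index v q)"
  using assms by (simp add: scalar_prod_def lessThan_atLeast0)

lemma ident:
  fixes v :: "nat \<Rightarrow> complex"
  shows "2 * (\<Sum>p<Suc m. cnj (v p) * v p) - ((\<Sum>p<m. cnj (v p) * v (Suc p)) + (\<Sum>p<m. cnj (v (Suc p)) * v p))
    = cnj (v 0) * v 0 + cnj (v m) * v m + (\<Sum>p<m. cnj (v (Suc p) - v p) * (v (Suc p) - v p))"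
proof (induction m)
  case 0
  then show ?case by simp
next
  case (Suc m)
  then show ?case by (simp add: algebra_simps)
qed

lemma cnj_sq: "cnj z * z = of_real ((cmod z)^2)"
  by (metis complex_norm_square mult.commute)

lemma core:
  fixes v :: "nat \<Rightarrow> complex" and a :: real
  assumes eq: "\<And>p. p < Suc m \<Longrightarrow> of_real a * ((if p = 0 then 0 else v (p - 1)) + (if p + 1 < Suc m then v (p + 1) else 0))
                 - 2 * of_real a * v p = c * v p"
    and nz: "\<exists>p<Suc m. v p \<noteq> 0" and a: "a \<ge> 0"
  shows "Im c = 0 \<and> Re c \<le> 0 \<and> (a > 0 \<longrightarrow> Re c < 0)"
proof -
  define A where "A = (of_real a :: complex)"
  define N where "N = (\<Sum>p<Suc m. cnj (v p) * v p)"
  define L where "L = (\<Sum>p<m. cnj (v (Suc p)) * v p)"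
  define U where "U = (\<Sum>p<m. cnj (v p) * v (Suc p))"
  define R where "R = cnj (v 0) * v 0 + cnj (v m) * v m + (\<Sum>p<m. cnj (v (Suc p) - v p) * (v (Suc p) - v p))"
  have id: "2 * N - (U + L) = R" unfolding N_def U_def L_def R_def by (rule ident)
  have L: "(\<Sum>p<Suc m. cnj (v p) * (if p = 0 then 0 else v (p - 1))) = L"
    unfolding L_def by (subst sum.lessThan_Suc_shift) simp
  have U: "(\<Sum>p<Suc m. cnj (v p) * (if p + 1 < Suc m then v (p + 1) else 0)) = U"
    unfolding U_def by (simp add: sum.lessThan_Suc)
  have "c * N = (\<Sum>p<Suc m. cnj (v p) * (c * v p))"
    unfolding N_def by (simp add: sum_distrib_left algebra_simps)
  also have "\<dots> = (\<Sum>p<Suc m. cnj (v p) * (A * ((if p = 0 then 0 else v (p - 1)) + (if p + 1 < Suc m then v (p + 1) else 0))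
                 - 2 * A * v p))"
    apply (rule sum.cong[OF refl])
    apply (subst eq[symmetric])
     apply simp
    apply (simp add: A_def)
    done
  also have "\<dots> = A * (\<Sum>p<Suc m. cnj (v p) * (if p = 0 then 0 else v (p - 1)))
      + A * (\<Sum>p<Suc m. cnj (v p) * (if p + 1 < Suc m then v (p + 1) else 0)) - 2 * A * N"
    unfolding N_def by (simp add: sum_distrib_left algebra_simps sum.distrib sum_subtractf)
  also have "\<dots> = - A * R" unfolding L U id[symmetric] by (simp add: algebra_simps)
  finally have cN: "c * N = - A * R" .
  define Nr where "Nr = (\<Sum>p<Suc m. (cmod (v p))^2)"
  define Rr where "Rr = (cmod (v 0))^2 + (cmod (v m))^2 + (\<Sum>p<m. (cmod (v (Suc p) - v p))^2)"
  have NNr: "N = of_real Nr" unfolding N_def Nr_def by (simp add: cnj_sq)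
  have RRr: "R = of_real Rr" unfolding R_def Rr_def by (simp add: cnj_sq flip: complex_cnj_diff)
  have Nr: "Nr > 0"
  proof -
    obtain p where p: "p < Suc m" "v p \<noteq> 0" using nz by blast
    have "(cmod (v p))^2 \<le> Nr" unfolding Nr_def
      by (rule member_le_sum) (use p in auto)
    moreover have "(cmod (v p))^2 > 0" using p by simp
    ultimately show ?thesis by linarith
  qed
  have Rr0: "Rr \<ge> 0" unfolding Rr_def by (simp add: sum_nonneg)
  have Rr: "Rr > 0"
  proof (rule ccontr)
    assume "\<not> Rr > 0"
    then have "Rr = 0" using Rr0 by simp
    then have z0: "v 0 = 0" and zs: "\<And>p. p < m \<Longrightarrow> v (Suc p) = v p"
      unfolding Rr_def by (auto simp: add_nonneg_eq_0_iff sum_nonneg sum_nonneg_eq_0_iff)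
    have "\<And>p. p \<le> m \<Longrightarrow> v p = 0"
    proof -
      fix p show "p \<le> m \<Longrightarrow> v p = 0"
        by (induction p) (use z0 zs in auto)
    qed
    then show False using nz by auto
  qed
  have "c = of_real (- a * Rr / Nr)"
    using cN Nr unfolding NNr RRr A_def
    by (simp add: field_simps)
  then show ?thesis using a Rr Nr by (auto simp: divide_pos_pos mult_pos_pos divide_nonneg_pos)
qed

lemma map_M: "map_mat complex_of_real (mat n n (\<lambda>(p, q). Jent a p q)) = mat n n (\<lambda>(p, q). Jg (of_real a) p q)"
  by (rule eq_matI) (auto simp: of_real_Jent)

lemma vec_nz: assumes "v \<in> carrier_vec n" "v \<noteq> 0\<^sub>v n" shows "\<exists>p<n. vec_index v p \<noteq> 0"
proof (rule ccontr)
  assume "\<not> ?thesis"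
  then have "v = 0\<^sub>v n" using assms(1) by (intro eq_vecI) auto
  then show False using assms(2) by simp
qed

lemma eig_complex:
  assumes "a \<ge> 0" "eigenvalue (map_mat complex_of_real (mat n n (\<lambda>(p, q). Jent a p q))) c"
  shows "Im c = 0 \<and> Re c \<le> 0 \<and> (a > 0 \<longrightarrow> Re c < 0)"
proof -
  obtain v where v: "v \<in> carrier_vec n" "v \<noteq> 0\<^sub>v n"
     and ev: "mat n n (\<lambda>(p, q). Jg (of_real a) p q) *\<^sub>v v = c \<cdot>\<^sub>v v"
    using assms(2) unfolding eigenvalue_def eigenvector_def map_M by auto
  obtain p0 where p0: "p0 < n" "vec_index v p0 \<noteq> 0" using vec_nz[OF v] by blast
  then obtain m where m: "n = Suc m" by (cases n) auto
  have eq: "of_real a * ((if p = 0 then 0 else vec_index v (p - 1)) + (if p + 1 < Suc m then vec_index v (p + 1) else 0))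
                 - 2 * of_real a * vec_index v p = c * vec_index v p" if p: "p < Suc m" for p
  proof -
    have e1: "vec_index (mat n n (\<lambda>(p, q). Jg (of_real a) p q) *\<^sub>v v) p = (\<Sum>q<n. Jg (of_real a) p q * vec_index v q)"
      by (rule mat_mult_entry[OF v(1)]) (use p m in simp)
    have "vec_index (mat n n (\<lambda>(p, q). Jg (of_real a) p q) *\<^sub>v v) p = vec_index (c \<cdot>\<^sub>v v) p" using ev by simp
    then have "(\<Sum>q<n. Jg (of_real a) p q * vec_index v q) = c * vec_index v p"
      using p v m e1 by simp
    then show ?thesis using p m tri_sum[where v = "\<lambda>q. vec_index v q" and p = p and n = n and a = "of_real a"] by simp
  qed
  show ?thesis
    by (rule core[where v = "\<lambda>q. vec_index v q" and m = m]) (use eq p0 m assms(1) in auto)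
qed

lemma stable_M: "a > 0 \<Longrightarrow> lin_stable (mat n n (\<lambda>(p, q). Jent a p q))"
  unfolding lin_stable_def using eig_complex[of a n] by auto

lemma not_unstable_M: assumes "a \<ge> 0" shows "\<not> lin_unstable (mat n n (\<lambda>(p, q). Jent a p q))"
proof
  assume "lin_unstable (mat n n (\<lambda>(p, q). Jent a p q))"
  then obtain r v where r: "r > 0" and v: "v \<in> carrier_vec n" "v \<noteq> 0\<^sub>v n"
     and ev: "mat n n (\<lambda>(p, q). Jent a p q) *\<^sub>v v = r \<cdot>\<^sub>v v"
    unfolding lin_unstable_def eigenvalue_def eigenvector_def by auto
  obtain p0 where p0: "p0 < n" "vec_index v p0 \<noteq> 0" using vec_nz[OF v] by blast
  then obtain m where m: "n = Suc m" by (cases n) auto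
  have eq: "a * ((if p = 0 then 0 else vec_index v (p - 1)) + (if p + 1 < Suc m then vec_index v (p + 1) else 0))
                 - 2 * a * vec_index v p = r * vec_index v p" if p: "p < Suc m" for p
  proof -
    have e1: "vec_index (mat n n (\<lambda>(p, q). Jent a p q) *\<^sub>v v) p = (\<Sum>q<n. Jent a p q * vec_index v q)"
      by (rule mat_mult_entry[OF v(1)]) (use p m in simp)
    have "vec_index (mat n n (\<lambda>(p, q). Jent a p q) *\<^sub>v v) p = vec_index (r \<cdot>\<^sub>v v) p" using ev by simp
    then have "(\<Sum>q<n. Jg a p q * vec_index v q) = r * vec_index v p"
      using p v m e1 by (simp add: Jent_Jg)
    then show ?thesis using p m tri_sum[where v = "\<lambda>q. vec_index v q" and p = p and n = n and a = a] by simp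
  qed
  have eqc: "of_real a * ((if p = 0 then 0 else of_real (vec_index v (p - 1))) + (if p + 1 < Suc m then of_real (vec_index v (p + 1)) else 0))
                 - 2 * of_real a * of_real (vec_index v p) = (of_real r :: complex) * of_real (vec_index v p)" if p: "p < Suc m" for p
  proof -
    have "of_real (a * ((if p = 0 then 0 else vec_index v (p - 1)) + (if p + 1 < Suc m then vec_index v (p + 1) else 0))
                 - 2 * a * vec_index v p) = (of_real (r * vec_index v p) :: complex)" using eq[OF p] by simp
    then show ?thesis by (simp split: if_splits)
  qed
  have "Im (of_real r) = 0 \<and> Re (of_real r :: complex) \<le> 0 \<and> (a > 0 \<longrightarrow> Re (of_real r :: complex) < 0)"
    by (rule core[where v = "\<lambda>q. of_real (vec_index v q)" and m = m]) (use eqc p0 m assms(1) in auto)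
  then show False using r by simp
qed

lemma sin_sum_id: "sin ((x::real) - t) + sin (x + t) = 2 * sin x * cos t"
  by (simp add: sin_add sin_diff)

lemma unstable_M: assumes a: "a < 0" and n: "n \<ge> 1"
  shows "lin_unstable (mat n n (\<lambda>(p, q). Jent a p q))"
proof -
  define t where "t = pi / (real n + 1)"
  have t0: "0 < t" and tpi: "t < pi" using n unfolding t_def by (auto simp: field_simps)
  have tn: "(real n + 1) * t = pi" unfolding t_def by simp
  define r where "r = a * (2 * cos t - 2)"
  have "cos t < cos 0" by (rule cos_monotone_0_pi) (use t0 tpi in auto)
  then have r: "r > 0" unfolding r_def using a by (simp add: mult_neg_neg)
  define v where "v = vec n (\<lambda>q. sin ((real q + 1) * t))"
  have vc: "v \<in> carrier_vec n" unfolding v_def by simp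
  have vnz: "v \<noteq> 0\<^sub>v n"
  proof
    assume "v = 0\<^sub>v n"
    then have "vec_index v 0 = 0" using n by simp
    moreover have "vec_index v 0 = sin t" using n unfolding v_def by simp
    ultimately show False using sin_gt_zero[OF t0 tpi] by simp
  qed
  have "mat n n (\<lambda>(p, q). Jent a p q) *\<^sub>v v = r \<cdot>\<^sub>v v"
  proof (rule eq_vecI)
    fix p assume "p < dim_vec (r \<cdot>\<^sub>v v)"
    then have p: "p < n" using vc by simp
    have e1: "vec_index (mat n n (\<lambda>(p, q). Jent a p q) *\<^sub>v v) p = (\<Sum>q<n. Jg a p q * vec_index v q)"
      by (subst mat_mult_entry[OF vc p]) (simp add: Jent_Jg)
    also have "\<dots> = a * ((if p = 0 then 0 else vec_index v (p - 1)) + (if p + 1 < n then vec_index v (p + 1) else 0))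
        - 2 * a * vec_index v p" by (rule tri_sum[OF p])
    also have "(if p = 0 then 0 else vec_index v (p - 1)) = sin (real p * t)"
      using p unfolding v_def by (auto simp: of_nat_diff)
    also have "(if p + 1 < n then vec_index v (p + 1) else 0) = sin ((real p + 2) * t)"
    proof (cases "p + 1 < n")
      case True then show ?thesis unfolding v_def by (simp add: algebra_simps)
    next
      case False
      then have "p + 1 = n" using p by simp
      then have "(real p + 2) * t = pi" using tn by (metis add.assoc of_nat_1 of_nat_add one_add_one)
      then show ?thesis using False by simp
    qed
    also have "vec_index v p = sin ((real p + 1) * t)" unfolding v_def using p by simp
    also have "sin (real p * t) + sin ((real p + 2) * t) = 2 * sin ((real p + 1) * t) * cos t"
      using sin_sum_id[of "(real p + 1) * t" t] by (simp add: algebra_simps)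
    finally show "vec_index (mat n n (\<lambda>(p, q). Jent a p q) *\<^sub>v v) p = vec_index (r \<cdot>\<^sub>v v) p"
      using p vc unfolding r_def v_def by (simp add: algebra_simps)
  next
    show "dim_vec (mat n n (\<lambda>(p, q). Jent a p q) *\<^sub>v v) = dim_vec (r \<cdot>\<^sub>v v)" using vc by simp
  qed
  then show ?thesis unfolding lin_unstable_def eigenvalue_def eigenvector_def
    using r vc vnz by auto
qed



definition G :: "real \<Rightarrow> real \<Rightarrow> real" where
  "G k x = (2 * x - 1) * exp (x * k)"

lemma acoef_G: "acoef g d = (1 - G (1 - d) g) / (2 * (1 + exp (g - g * d)))"
proof -
  obtain E where E: "exp (g - g * d) = E" "E > 0" by simp
  have e: "exp (g * (1 - d)) = E" using E(1) by (simp add: algebra_simps)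
  have A: "acoef g d = 1/2 - g*E/(1+E)" unfolding acoef_def E(1) ..
  have B: "G (1 - d) g = (2*g-1)*E" unfolding G_def using E(1) by (simp add: algebra_simps)
  have "1 + E \<noteq> 0" using E(2) by simp
  then show ?thesis unfolding A B E(1) by (simp add: field_simps)
qed

lemma den_pos: "(0::real) < 2 + 2 * exp (g - g * d)"
  by (simp add: add_pos_pos)

lemma acoef_pos: "G (1 - d) g < 1 \<Longrightarrow> acoef g d > 0"
  unfolding acoef_G by (rule divide_pos_pos) (simp_all add: den_pos)
lemma acoef_neg: "G (1 - d) g > 1 \<Longrightarrow> acoef g d < 0"
  unfolding acoef_G by (rule divide_neg_pos) (simp_all add: den_pos)
lemma acoef_nn: "G (1 - d) g \<le> 1 \<Longrightarrow> acoef g d \<ge> 0"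
  unfolding acoef_G by (rule divide_nonneg_pos) (simp_all add: den_pos)

lemma J_stable: "G (1 - d) g < 1 \<Longrightarrow> lin_stable (path_jacobian n g d)"
  unfolding jac_eq by (rule stable_M[OF acoef_pos])
lemma J_unstable: "G (1 - d) g > 1 \<Longrightarrow> n \<ge> 1 \<Longrightarrow> lin_unstable (path_jacobian n g d)"
  unfolding jac_eq by (rule unstable_M[OF acoef_neg])
lemma J_not_unstable: "G (1 - d) g \<le> 1 \<Longrightarrow> \<not> lin_unstable (path_jacobian n g d)"
  unfolding jac_eq by (rule not_unstable_M[OF acoef_nn])

lemma G_cont: "continuous_on S (G k)"
  unfolding G_def by (intro continuous_intros)

lemma G_deriv: "DERIV (G k) x :> exp (x * k) * (2 + k * (2 * x - 1))"
  unfolding G_def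
  by (rule derivative_eq_intros refl)+ (simp add: algebra_simps)

lemma G_le0: "x \<le> 1/2 \<Longrightarrow> G k x \<le> 0"
  unfolding G_def by (simp add: mult_nonpos_nonneg)

lemma G_mono_k: assumes "k \<ge> 0" "1/2 \<le> x" "x < y" shows "G k x < G k y"
proof -
  have "exp (x * k) \<le> exp (y * k)" using assms by (simp add: mult_right_mono)
  then have "(2*x - 1) * exp (x * k) \<le> (2*x - 1) * exp (y * k)" using assms by (intro mult_left_mono) auto
  also have "\<dots> < (2*y - 1) * exp (y * k)" using assms by simp
  finally show ?thesis unfolding G_def .
qed

lemma G_inc: assumes "c > 0" "1/2 \<le> x" "x < y" "y \<le> 1/2 + 1/c" shows "G (-c) x < G (-c) y"
proof (rule DERIV_pos_imp_increasing_open[OF assms(3)])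
  fix z assume z: "x < z" "z < y"
  have "2 * y - 1 \<le> 2 / c" using assms by simp
  then have "c * (2 * y - 1) \<le> 2" using assms(1) by (simp add: field_simps)
  moreover have "c * (2 * z - 1) < c * (2 * y - 1)" using z assms(1) by (intro mult_strict_left_mono) auto
  ultimately have "c * (2 * z - 1) < 2" by linarith
  then show "\<exists>d. DERIV (G (-c)) z :> d \<and> d > 0"
    using G_deriv[of "-c" z] by (intro exI[of _ "exp (z * (-c)) * (2 + (-c) * (2 * z - 1))"]) simp
qed (rule G_cont)

lemma G_dec: assumes "c > 0" "1/2 + 1/c \<le> x" "x < y" shows "G (-c) x > G (-c) y"
proof (rule DERIV_neg_imp_decreasing_open[OF assms(3)])
  fix z assume z: "x < z" "z < y"
  have "2 * x - 1 \<ge> 2 / c" using assms by simp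
  then have "c * (2 * x - 1) \<ge> 2" using assms(1) by (simp add: field_simps)
  moreover have "c * (2 * x - 1) < c * (2 * z - 1)" using z assms(1) by (intro mult_strict_left_mono) auto
  ultimately have "c * (2 * z - 1) > 2" by linarith
  then show "\<exists>d. DERIV (G (-c)) z :> d \<and> d < 0"
    using G_deriv[of "-c" z] by (intro exI[of _ "exp (z * (-c)) * (2 + (-c) * (2 * z - 1))"])
      (simp add: mult_pos_neg)
qed (rule G_cont)

lemma G_peak: assumes "c > 0" shows "G (-c) (1/2 + 1/c) = (2 / c) * exp (- c / 2 - 1)"
  unfolding G_def using assms by (simp add: field_simps)

lemma G_far: assumes "c > 0" "T \<ge> 8 / c^2" "T > 0" shows "G (-c) T < 1"
proof -
  have e: "exp (c * T) = (exp (c * T / 2))^2" by (simp flip: exp_double)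
  have "1 + c * T / 2 \<le> exp (c * T / 2)" by (rule exp_ge_add_one_self)
  then have lt: "c * T / 2 < exp (c * T / 2)" by linarith
  have "0 \<le> c * T / 2" using assms by simp
  then have "(c * T / 2)^2 < (exp (c * T / 2))^2"
    using lt by (intro power_strict_mono) auto
  then have big: "(c * T)^2 / 4 < exp (c * T)" unfolding e by (simp add: power_divide)
  have "8 / c^2 * c^2 \<le> T * c^2" using assms by (intro mult_right_mono) auto
  then have "8 \<le> T * c^2" using assms by simp
  then have "2 * T * 4 \<le> (c * T)^2" using assms
    by (simp add: power2_eq_square algebra_simps)
  then have "2 * T < exp (c * T)" using big by linarith
  then have "(2 * T - 1) < exp (c * T)" by linarith
  then have "(2 * T - 1) * exp (T * (-c)) < exp (c * T) * exp (T * (-c))"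
    by (intro mult_strict_right_mono) auto
  also have "\<dots> = 1" by (simp flip: exp_add)
  finally show ?thesis unfolding G_def .
qed



lemma G_half: "G k (1/2) = 0" unfolding G_def by simp

theorem theorem5:
  fixes n :: nat and \<delta> y :: real
  assumes n: "n \<ge> 1"
    and \<delta>: "\<delta> \<ge> 0"
    and y: "y < 0" "exp (y - 2) = y^2 / 4"
  shows
   "(\<delta> \<le> 1 \<longrightarrow>
      (\<exists>\<gamma>c > 0. (\<forall>\<gamma>. 0 \<le> \<gamma> \<and> \<gamma> < \<gamma>c \<longrightarrow> lin_stable (path_jacobian n \<gamma> \<delta>))
               \<and> (\<forall>\<gamma>. \<gamma> > \<gamma>c \<longrightarrow> lin_unstable (path_jacobian n \<gamma> \<delta>))
               \<and> (\<delta> = 1 \<longrightarrow> \<gamma>c = 1)))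
  \<and> (1 < \<delta> \<and> \<delta> < 1 - y \<longrightarrow>
      (\<exists>\<gamma>1 \<gamma>2. 0 < \<gamma>1 \<and> \<gamma>1 < \<gamma>2
         \<and> (\<forall>\<gamma>. 0 \<le> \<gamma> \<longrightarrow> (lin_unstable (path_jacobian n \<gamma> \<delta>) \<longleftrightarrow> \<gamma>1 < \<gamma> \<and> \<gamma> < \<gamma>2))
         \<and> (\<forall>\<gamma>. 0 \<le> \<gamma> \<and> (\<gamma> < \<gamma>1 \<or> \<gamma> > \<gamma>2) \<longrightarrow> lin_stable (path_jacobian n \<gamma> \<delta>))))
  \<and> (\<delta> > 1 - y \<longrightarrow> (\<forall>\<gamma> > 0. lin_stable (path_jacobian n \<gamma> \<delta>)))"
proof (intro conjI impI)
  assume d1: "\<delta> \<le> 1"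
  define k where "k = 1 - \<delta>"
  have k: "k \<ge> 0" using d1 unfolding k_def by simp
  have "G k 1 \<ge> 1" unfolding G_def using k by simp
  then obtain gc where gc: "1/2 \<le> gc" "gc \<le> 1" "G k gc = 1"
    using IVT'[of "G k" "1/2" 1 1] G_half G_cont by auto
  have gc0: "gc > 0" using gc by simp
  show "\<exists>\<gamma>c > 0. (\<forall>\<gamma>. 0 \<le> \<gamma> \<and> \<gamma> < \<gamma>c \<longrightarrow> lin_stable (path_jacobian n \<gamma> \<delta>))
               \<and> (\<forall>\<gamma>. \<gamma> > \<gamma>c \<longrightarrow> lin_unstable (path_jacobian n \<gamma> \<delta>))
               \<and> (\<delta> = 1 \<longrightarrow> \<gamma>c = 1)"
  proof (intro exI[of _ gc] conjI allI impI gc0)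
    fix g :: real assume g: "0 \<le> g \<and> g < gc"
    have "G k g < 1"
    proof (cases "g \<le> 1/2")
      case True then show ?thesis using G_le0[of g k] by simp
    next
      case False then show ?thesis using G_mono_k[OF k, of g gc] g gc by simp
    qed
    then show "lin_stable (path_jacobian n g \<delta>)" unfolding k_def by (rule J_stable)
  next
    fix g :: real assume g: "gc < g"
    have "G k g > 1" using G_mono_k[OF k, of gc g] g gc by simp
    then show "lin_unstable (path_jacobian n g \<delta>)" unfolding k_def using n by (rule J_unstable)
  next
    assume "\<delta> = 1"
    then have "k = 0" unfolding k_def by simp
    then show "gc = 1" using gc(3) unfolding G_def by simp
  qed
next
  define s where "s = - y"
  have s: "s > 0" "exp (- s - 2) = s^2 / 4" using y unfolding s_def by (simp_all add: algebra_simps)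
  define c where "c = \<delta> - 1"
  have kc: "1 - \<delta> = - c" unfolding c_def by simp
  define xs where "xs = 1/2 + 1/c"
  {
    assume a: "1 < \<delta> \<and> \<delta> < 1 - y"
    have c: "c > 0" "c < s" using a unfolding c_def s_def by auto
    have "(c/2)^2 < (s/2)^2" using c by (intro power_strict_mono) auto
    also have "\<dots> = exp (- s - 2)" using s by (simp add: power_divide)
    also have "\<dots> < exp (- c - 2)" using c by simp
    also have "\<dots> = (exp (- c / 2 - 1))^2" by (simp flip: exp_double)
    finally have "c / 2 < exp (- c / 2 - 1)" by (rule power_less_imp_less_base) simp
    then have peak: "G (-c) xs > 1" unfolding xs_def G_peak[OF c(1)] using c by (simp add: field_simps)
    have xs: "1/2 < xs" using c unfolding xs_def by simp
    obtain g1 where g1: "1/2 \<le> g1" "g1 \<le> xs" "G (-c) g1 = 1"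
      using IVT'[of "G (-c)" "1/2" 1 xs] G_half G_cont peak xs by auto
    have "g1 \<noteq> 1/2"
    proof
      assume "g1 = 1/2"
      then have "G (-c) g1 = 0" using G_half[of "-c"] by (simp only:)
      then show False using g1(3) by simp
    qed
    moreover have "g1 \<noteq> xs" using g1(3) peak by auto
    ultimately have g1': "1/2 < g1" "g1 < xs" using g1 by auto
    define T where "T = xs + 8 / c^2"
    have "8 / c^2 > 0" using c by simp
    then have T: "T > 0" "T \<ge> 8 / c^2" "xs \<le> T" using xs unfolding T_def by linarith+
    have GT: "G (-c) T < 1" by (rule G_far) (use c T in auto)
    obtain g2 where g2: "xs \<le> g2" "g2 \<le> T" "G (-c) g2 = 1"
      using IVT2'[of "G (-c)" T 1 xs] G_cont peak GT T by auto
    have g2': "xs < g2" using g2 peak by (auto simp: order.order_iff_strict)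
    have lowG: "G (-c) g < 1" if "g < g1" for g
    proof (cases "g \<le> 1/2")
      case True then show ?thesis using G_le0[of g "-c"] by simp
    next
      case False then show ?thesis using G_inc[OF c(1), of g g1] that g1 by (simp add: xs_def)
    qed
    have highG: "G (-c) g < 1" if "g > g2" for g
      using G_dec[OF c(1), of g2 g] that g2 g2' by (simp add: xs_def)
    have midG: "G (-c) g > 1" if "g1 < g" "g < g2" for g
    proof (cases "g \<le> xs")
      case True then show ?thesis using G_inc[OF c(1), of g1 g] that g1 by (simp add: xs_def)
    next
      case False then show ?thesis using G_dec[OF c(1), of g g2] that g2 by (simp add: xs_def)
    qed
    have "0 < g1 \<and> g1 < g2
         \<and> (\<forall>\<gamma>. 0 \<le> \<gamma> \<longrightarrow> (lin_unstable (path_jacobian n \<gamma> \<delta>) \<longleftrightarrow> g1 < \<gamma> \<and> \<gamma> < g2))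
         \<and> (\<forall>\<gamma>. 0 \<le> \<gamma> \<and> (\<gamma> < g1 \<or> \<gamma> > g2) \<longrightarrow> lin_stable (path_jacobian n \<gamma> \<delta>))"
    proof (intro conjI allI impI)
      show "0 < g1" using g1' by simp
      show "g1 < g2" using g1' g2' by simp
    next
      fix g :: real assume "0 \<le> g"
      show "lin_unstable (path_jacobian n g \<delta>) \<longleftrightarrow> g1 < g \<and> g < g2"
      proof
        assume u: "lin_unstable (path_jacobian n g \<delta>)"
        show "g1 < g \<and> g < g2"
        proof (rule ccontr)
          assume "\<not> (g1 < g \<and> g < g2)"
          then have "G (-c) g \<le> 1"
            using lowG[of g] highG[of g] g1 g2 by (cases "g = g1 \<or> g = g2") (auto simp: not_less)
          then have "\<not> lin_unstable (path_jacobian n g \<delta>)" using J_not_unstable[of \<delta> g n] kc by simp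
          then show False using u by simp
        qed
      next
        assume "g1 < g \<and> g < g2"
        then have "G (1 - \<delta>) g > 1" using midG kc by simp
        then show "lin_unstable (path_jacobian n g \<delta>)" using n by (rule J_unstable)
      qed
    next
      fix g :: real assume "0 \<le> g \<and> (g < g1 \<or> g > g2)"
      then have "G (1 - \<delta>) g < 1" using lowG highG kc by auto
      then show "lin_stable (path_jacobian n g \<delta>)" by (rule J_stable)
    qed
    then have "\<exists>\<gamma>1 \<gamma>2. 0 < \<gamma>1 \<and> \<gamma>1 < \<gamma>2
         \<and> (\<forall>\<gamma>. 0 \<le> \<gamma> \<longrightarrow> (lin_unstable (path_jacobian n \<gamma> \<delta>) \<longleftrightarrow> \<gamma>1 < \<gamma> \<and> \<gamma> < \<gamma>2))
         \<and> (\<forall>\<gamma>. 0 \<le> \<gamma> \<and> (\<gamma> < \<gamma>1 \<or> \<gamma> > \<gamma>2) \<longrightarrow> lin_stable (path_jacobian n \<gamma> \<delta>))" by blast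
  }
  then show "1 < \<delta> \<and> \<delta> < 1 - y \<Longrightarrow> \<exists>\<gamma>1 \<gamma>2. 0 < \<gamma>1 \<and> \<gamma>1 < \<gamma>2
         \<and> (\<forall>\<gamma>. 0 \<le> \<gamma> \<longrightarrow> (lin_unstable (path_jacobian n \<gamma> \<delta>) \<longleftrightarrow> \<gamma>1 < \<gamma> \<and> \<gamma> < \<gamma>2))
         \<and> (\<forall>\<gamma>. 0 \<le> \<gamma> \<and> (\<gamma> < \<gamma>1 \<or> \<gamma> > \<gamma>2) \<longrightarrow> lin_stable (path_jacobian n \<gamma> \<delta>))" .
next
  assume a: "1 - y < \<delta>"
  define s where "s = - y"
  have s: "s > 0" "exp (- s - 2) = s^2 / 4" using y unfolding s_def by (simp_all add: algebra_simps)
  define c where "c = \<delta> - 1"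
  have kc: "1 - \<delta> = - c" unfolding c_def by simp
  define xs where "xs = 1/2 + 1/c"
  have c: "c > 0" "c > s" using a s unfolding c_def s_def by auto
  have "(exp (- c / 2 - 1))^2 = exp (- c - 2)" by (simp flip: exp_double)
  also have "\<dots> < exp (- s - 2)" using c by simp
  also have "\<dots> = (s/2)^2" using s by (simp add: power_divide)
  also have "\<dots> < (c/2)^2" using c s by (intro power_strict_mono) auto
  finally have "exp (- c / 2 - 1) < c / 2" by (rule power_less_imp_less_base) (use c in simp)
  then have peak: "G (-c) xs < 1" unfolding xs_def G_peak[OF c(1)] using c by (simp add: field_simps)
  show "\<forall>\<gamma> > 0. lin_stable (path_jacobian n \<gamma> \<delta>)"
  proof (intro allI impI)
    fix g :: real assume "g > 0"
    have "G (-c) g < 1"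
    proof (cases "g \<le> 1/2")
      case True then show ?thesis using G_le0[of g "-c"] by simp
    next
      case False
      show ?thesis
      proof (cases "g < xs")
        case True then show ?thesis using G_inc[OF c(1), of g xs] False peak unfolding xs_def by simp
      next
        case F2: False
        then show ?thesis using G_dec[OF c(1), of xs g] peak unfolding xs_def
          by (cases "g = xs") (auto simp: xs_def)
      qed
    qed
    then show "lin_stable (path_jacobian n g \<delta>)" using kc by (intro J_stable) simp
  qed
qed

end
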